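(* Let $u_1,\dots,u_n\in\mathbb{R}^d$, $c_1,\dots,c_m\in\mathbb{R}^n_{\ge0}$, budgets $b_1,\dots,b_m$, and $\varepsilon>0$ with $b_j\ge\frac{d\|c_j\|_\infty}{\varepsilon}$ for all $1\le j\le m$. Let $x\in[0,1]^n$ be an optimal solution of the convex program: minimize $\operatorname{tr}((\sum_{i=1}^n x(i)u_iu_i^\top)^{-1})$ subject to $\langle c_j,x\rangle\le b_j$ ($1\le j\le m$), $0\le x(i)\le1$ ($1\le i\le n$). Let $X=\sum_i x(i)u_iu_i^\top$ (nonsingular) and $v_i=X^{-1/2}u_i$. Then for each $1\le i\le n$ with $0<x(i)<1$, \[ \langle X^{-1},v_iv_i^\top\rangle\le\frac{\varepsilon}{d}\operatorname{tr}(X^{-1}). \]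
   Context: $\langle M,N\rangle=\operatorname{tr}(MN)$ for symmetric matrices. *)

theory Defs
  imports "HOL-Analysis.Analysis"
begin

definition outer :: "real^'d \<Rightarrow> real^'d^'d" where
  "outer u = (\<chi> i j. u$i * u$j)"

definition frob :: "real^'d^'d \<Rightarrow> real^'d^'d \<Rightarrow> real" where
  "frob M N = trace (M ** N)"

definition design :: "real^'n \<Rightarrow> ('n \<Rightarrow> real^'d) \<Rightarrow> real^'d^'d" where
  "design y u = (\<Sum>i\<in>UNIV. y$i *\<^sub>R outer (u i))"

definition feasible :: "nat \<Rightarrow> (nat \<Rightarrow> real^'n) \<Rightarrow> (nat \<Rightarrow> real) \<Rightarrow> real^'n \<Rightarrow> bool" where
  "feasible m c b y \<longleftrightarrow> (\<forall>j<m. c j \<bullet> y \<le> b j) \<and> (\<forall>i. 0 \<le> y$i \<and> y$i \<le> 1)"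

text \<open>Optimal solution of: minimize tr((design y u)^-1) subject to feasibility; the
objective is +infinity (outside its domain) when design y u is singular.\<close>
definition optimal :: "('n \<Rightarrow> real^'d) \<Rightarrow> nat \<Rightarrow> (nat \<Rightarrow> real^'n) \<Rightarrow> (nat \<Rightarrow> real) \<Rightarrow> real^'n \<Rightarrow> bool" where
  "optimal u m c b x \<longleftrightarrow> feasible m c b x \<and> invertible (design x u) \<and>
     (\<forall>y. feasible m c b y \<and> invertible (design y u) \<longrightarrow>
        trace (matrix_inv (design x u)) \<le> trace (matrix_inv (design y u)))"

definition psd :: "real^'d^'d \<Rightarrow> bool" where
  "psd A \<longleftrightarrow> transpose A = A \<and> (\<forall>v. 0 \<le> v \<bullet> (A *v v))"

definition msqrt :: "real^'d^'d \<Rightarrow> real^'d^'d" where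
  "msqrt A = (THE S. psd S \<and> S ** S = A)"

end

theory Submission
  imports Defs
begin

lemma mv_sum: "(sum g F) *v (v::real^'n) = sum (\<lambda>f. g f *v v) F"
  by (induct F rule: infinite_finite_induct) (auto simp: matrix_vector_mult_add_rdistrib)

lemma mv_scaleR: "(c *\<^sub>R M) *v (v::real^'n) = c *\<^sub>R (M *v v)"
  by (simp add: vec_eq_iff matrix_vector_mult_def sum_distrib_left mult.assoc)

lemma outer_mv: "outer f *v v = (f \<bullet> v) *\<^sub>R f"
  by (simp add: outer_def vec_eq_iff matrix_vector_mult_def inner_vec_def sum_distrib_left mult_ac)

lemma sym_dot: "transpose A = A \<Longrightarrow> x \<bullet> (A *v y) = (A *v x) \<bullet> (y::real^'n)"
  by (metis dot_lmul_matrix transpose_matrix_vector)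

lemma transpose_outer: "transpose (outer f) = outer f"
  by (simp add: outer_def transpose_def vec_eq_iff mult.commute)

lemma trace_outer: "trace (outer w) = w \<bullet> w"
  by (simp add: outer_def trace_def inner_vec_def)

lemma trace_scaleR: "trace (c *\<^sub>R (A::real^'n^'n)) = c * trace A"
  by (simp add: trace_def sum_distrib_left)

lemma frob_outer: "frob P (outer v) = v \<bullet> (P *v v)"
  by (simp add: frob_def trace_def outer_def matrix_matrix_mult_def inner_vec_def
      matrix_vector_mult_def sum_distrib_left mult_ac)

lemma matrix_inv_props:
  fixes A :: "real^'n^'n"
  assumes "invertible A"
  shows "A ** matrix_inv A = mat 1" "matrix_inv A ** A = mat 1"
proof -
  have "\<exists>A'. A ** A' = mat 1 \<and> A' ** A = mat 1" using assms by (simp add: invertible_def)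
  from someI_ex[OF this] show "A ** matrix_inv A = mat 1" "matrix_inv A ** A = mat 1"
    by (simp_all add: matrix_inv_def)
qed

lemma matrix_inv_eq:
  fixes A B :: "real^'n^'n"
  assumes "A ** B = mat 1"
  shows "matrix_inv A = B"
proof -
  have inv: "invertible A" using assms invertible_right_inverse by blast
  have "matrix_inv A = matrix_inv A ** (A ** B)" using assms by simp
  also have "\<dots> = B" by (simp add: matrix_mul_assoc matrix_inv_props(2)[OF inv])
  finally show ?thesis .
qed


lemma eigen_exists:
  fixes A :: "real^'n^'n"
  assumes sym: "transpose A = A" and V: "subspace V" and inv: "\<forall>y\<in>V. A *v y \<in> V" and ne: "V \<noteq> {0}"
  shows "\<exists>e\<in>V. norm e = 1 \<and> A *v e = (e \<bullet> (A *v e)) *\<^sub>R e"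
proof -
  let ?S = "V \<inter> sphere 0 1"
  have cS: "compact ?S" using closed_subspace[OF V] compact_sphere by (rule closed_Int_compact)
  obtain y where y: "y\<in>V" "y\<noteq>0" using ne V subspace_0 by blast
  then have "y /\<^sub>R norm y \<in> ?S" using V subspace_scale by auto
  hence neS: "?S \<noteq> {}" by blast
  have cont: "continuous_on ?S (\<lambda>y. y \<bullet> (A *v y))"
  proof -
    have "bounded_linear (\<lambda>y. A *v y)" using matrix_vector_mul_linear linear_conv_bounded_linear by blast
    then have "continuous_on ?S (\<lambda>y. A *v y)" by (rule linear_continuous_on)
    then show ?thesis by (intro continuous_on_inner continuous_on_id)
  qed
  obtain e where e: "e \<in> ?S" "\<forall>z\<in>?S. z \<bullet> (A *v z) \<le> e \<bullet> (A *v e)"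
    using continuous_attains_sup[OF cS neS cont] by auto
  define l where "l = e \<bullet> (A *v e)"
  have eV: "e \<in> V" and ne1: "norm e = 1" using e(1) by auto
  have ee: "e \<bullet> e = 1" using ne1 by (simp add: dot_square_norm)
  have bound: "z \<bullet> (A *v z) \<le> l * (z \<bullet> z)" if zV: "z \<in> V" for z
  proof (cases "z = 0")
    case True then show ?thesis by simp
  next
    case False
    let ?z = "z /\<^sub>R norm z"
    have "?z \<in> ?S" using zV V subspace_scale False by auto
    then have "?z \<bullet> (A *v ?z) \<le> l" using e(2) l_def by blast
    moreover have "?z \<bullet> (A *v ?z) = (z \<bullet> (A *v z)) / (norm z)^2"
      by (simp add: matrix_vector_mult_scaleR power2_eq_square divide_inverse mult_ac)
    moreover have "(norm z)^2 > 0" using False by simp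
    ultimately have "z \<bullet> (A *v z) \<le> l * (norm z)^2" by (simp add: divide_le_eq)
    then show ?thesis by (simp add: dot_square_norm)
  qed
  define w where "w = A *v e - l *\<^sub>R e"
  have wV: "w \<in> V" unfolding w_def using inv eV V by (simp add: subspace_diff subspace_scale)
  have we: "w \<bullet> (A *v e) - l * (w \<bullet> e) = w \<bullet> w"
    by (simp add: w_def inner_diff_right inner_diff_left algebra_simps)
  have key: "2*t*(w \<bullet> w) + t^2 * (w \<bullet> (A *v w) - l*(w \<bullet> w)) \<le> 0" for t
  proof -
    have "(e + t *\<^sub>R w) \<in> V" using eV wV V by (simp add: subspace_add subspace_scale)
    from bound[OF this] have b: "(e + t *\<^sub>R w) \<bullet> (A *v (e + t *\<^sub>R w)) \<le> l * ((e + t *\<^sub>R w) \<bullet> (e + t *\<^sub>R w))" .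
    have s: "e \<bullet> (A *v w) = w \<bullet> (A *v e)" using sym_dot[OF sym, of e w] by (simp add: inner_commute)
    have E1: "(e + t *\<^sub>R w) \<bullet> (A *v (e + t *\<^sub>R w)) = l + 2*t*(w \<bullet> (A *v e)) + t^2*(w \<bullet> (A *v w))"
      by (simp add: l_def s inner_add_left inner_add_right matrix_vector_right_distrib
          matrix_vector_mult_scaleR power2_eq_square algebra_simps)
    have E2: "(e + t *\<^sub>R w) \<bullet> (e + t *\<^sub>R w) = 1 + 2*t*(w \<bullet> e) + t^2*(w \<bullet> w)"
      by (simp add: ee inner_add_left inner_add_right power2_eq_square algebra_simps inner_commute)
    from b have "l + 2*t*(w \<bullet> (A *v e)) + t^2*(w \<bullet> (A *v w)) \<le> l * (1 + 2*t*(w \<bullet> e) + t^2*(w \<bullet> w))"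
      by (simp only: E1 E2)
    then have "2*t*(w \<bullet> (A *v e) - l*(w \<bullet> e)) + t^2 * (w \<bullet> (A *v w) - l*(w \<bullet> w)) \<le> 0"
      by (simp add: algebra_simps)
    then show ?thesis using we by simp
  qed
  have "w = 0"
  proof (rule ccontr)
    assume "w \<noteq> 0"
    define a where "a = w \<bullet> w"
    define C where "C = l * a - w \<bullet> (A *v w)"
    have a0: "a > 0" using \<open>w \<noteq> 0\<close> by (simp add: a_def)
    have C0: "C \<ge> 0" using bound[OF wV] by (simp add: C_def a_def)
    define t where "t = a / (C + 1)"
    have t0: "t > 0" using a0 C0 by (simp add: t_def)
    have tC: "t * C \<le> a" using a0 C0 by (simp add: t_def field_simps)
    have "2*t*a - t^2 * C \<le> 0" using key[of t] by (simp add: a_def C_def algebra_simps)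
    moreover have "t^2 * C = t * (t * C)" by (simp add: power2_eq_square)
    moreover have "t * (t * C) \<le> t * a" using tC t0 by simp
    ultimately have "t * a \<le> 0" by simp
    then show False using t0 a0 by (simp add: mult_le_0_iff)
  qed
  then have "A *v e = l *\<^sub>R e" by (simp add: w_def)
  then show ?thesis using eV ne1 l_def by blast
qed


definition OE :: "real^'n^'n \<Rightarrow> (real^'n) set \<Rightarrow> bool" where
  "OE A F \<longleftrightarrow> finite F \<and> pairwise orthogonal F \<and> (\<forall>f\<in>F. norm f = 1 \<and> A *v f = (f \<bullet> (A *v f)) *\<^sub>R f)"

lemma OE_inner: "OE A F \<Longrightarrow> f \<in> F \<Longrightarrow> g \<in> F \<Longrightarrow> f \<bullet> g = (if f = g then 1 else 0)"
  unfolding OE_def pairwise_def orthogonal_def by (auto simp: dot_square_norm)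

lemma OE_coeff:
  assumes "OE A F" "g \<in> F"
  shows "g \<bullet> (\<Sum>f\<in>F. c f *\<^sub>R f) = c g"
proof -
  have "g \<bullet> (\<Sum>f\<in>F. c f *\<^sub>R f) = (\<Sum>f\<in>F. c f * (g \<bullet> f))" by (simp add: inner_sum_right)
  also have "\<dots> = (\<Sum>f\<in>F. if f = g then c f else 0)"
    by (rule sum.cong) (auto simp: OE_inner[OF assms(1) assms(2)])
  also have "\<dots> = c g" using assms by (simp add: OE_def)
  finally show ?thesis .
qed

lemma OE_card: "OE A F \<Longrightarrow> card F \<le> DIM(real^'n)" for A :: "real^'n^'n"
proof -
  assume a: "OE A F"
  have "0 \<notin> F" using a by (auto simp: OE_def)
  moreover have "pairwise orthogonal F" using a by (simp add: OE_def)
  ultimately have "independent F" using pairwise_orthogonal_independent by blast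
  then show ?thesis using independent_bound by blast
qed

lemma OE_extend:
  fixes A :: "real^'n^'n"
  assumes sym: "transpose A = A" and F: "OE A F"
  shows "(\<forall>x. x = (\<Sum>f\<in>F. (f \<bullet> x) *\<^sub>R f)) \<or> (\<exists>e. e \<notin> F \<and> OE A (insert e F))"
proof -
  define V where "V = {y. \<forall>f\<in>F. f \<bullet> y = 0}"
  have V: "subspace V" unfolding V_def subspace_def by (auto simp: inner_add_right)
  have inv: "\<forall>y\<in>V. A *v y \<in> V"
  proof (intro ballI)
    fix y assume y: "y \<in> V"
    { fix f assume f: "f \<in> F"
      have "f \<bullet> (A *v y) = (A *v f) \<bullet> y" by (rule sym_dot[OF sym])
      also have "\<dots> = ((f \<bullet> (A *v f)) *\<^sub>R f) \<bullet> y" using F f unfolding OE_def by metis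
      also have "\<dots> = (f \<bullet> (A *v f)) * (f \<bullet> y)" by (rule inner_scaleR_left)
      also have "\<dots> = 0" using y f by (simp add: V_def)
      finally have "f \<bullet> (A *v y) = 0" . }
    then show "A *v y \<in> V" by (simp add: V_def)
  qed
  show ?thesis
  proof (cases "V = {0}")
    case True
    have "x = (\<Sum>f\<in>F. (f \<bullet> x) *\<^sub>R f)" for x
    proof -
      have "x - (\<Sum>f\<in>F. (f \<bullet> x) *\<^sub>R f) \<in> V"
        unfolding V_def using OE_coeff[OF F] by (simp add: inner_diff_right)
      then show ?thesis using True by simp
    qed
    then show ?thesis by blast
  next
    case False
    from eigen_exists[OF sym V inv False] obtain e where e: "e \<in> V" "norm e = 1"
      "A *v e = (e \<bullet> (A *v e)) *\<^sub>R e" by blast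
    have "e \<notin> F"
    proof
      assume "e \<in> F"
      then have "e \<bullet> e = 0" using e(1) by (simp add: V_def)
      then show False using e(2) by simp
    qed
    moreover have "OE A (insert e F)"
      using F e unfolding OE_def V_def pairwise_insert orthogonal_def
      by (auto simp: inner_commute)
    ultimately show ?thesis by blast
  qed
qed

lemma spectral:
  fixes A :: "real^'n^'n"
  assumes sym: "transpose A = A"
  shows "\<exists>F. OE A F \<and> (\<forall>x. x = (\<Sum>f\<in>F. (f \<bullet> x) *\<^sub>R f))"
proof (rule ccontr)
  assume no: "\<not> ?thesis"
  have "\<exists>F. OE A F \<and> card F = k" for k
  proof (induction k)
    case 0
    have "OE A {}" by (simp add: OE_def)
    then show ?case by auto
  next
    case (Suc k)
    then obtain F where F: "OE A F" "card F = k" by blast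
    from OE_extend[OF sym F(1)] no F(1) obtain e where "e \<notin> F" "OE A (insert e F)" by blast
    moreover have "finite F" using F(1) by (simp add: OE_def)
    ultimately show ?case using F(2) by (intro exI[of _ "insert e F"]) simp
  qed
  then obtain F where "OE A F" "card F = Suc (DIM(real^'n))" by blast
  then show False using OE_card by fastforce
qed


lemma mv_sum_right: "A *v (sum g F) = sum (\<lambda>f. A *v g f) F" for A :: "real^'n^'m"
  by (induct F rule: infinite_finite_induct) (auto simp: matrix_vector_right_distrib)

lemma transpose_add: "transpose (A + B) = transpose A + transpose (B::real^'n^'m)"
  by (simp add: transpose_def vec_eq_iff)

lemma transpose_sum: "transpose (sum g F) = sum (\<lambda>f. transpose (g f)) F" for g :: "_ \<Rightarrow> real^'n^'m"
  by (induct F rule: infinite_finite_induct) (auto simp: transpose_add transpose_def vec_eq_iff)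

lemma sqrt_exists_unique:
  fixes X :: "real^'d^'d"
  assumes sym: "transpose X = X" and pos: "\<forall>v. 0 \<le> v \<bullet> (X *v v)" and inv: "invertible X"
  shows "\<exists>!S. psd S \<and> S ** S = X"
proof -
  obtain F where F: "OE X F" and exp: "\<And>x. x = (\<Sum>f\<in>F. (f \<bullet> x) *\<^sub>R f)"
    using spectral[OF sym] by blast
  define lam where "lam f = f \<bullet> (X *v f)" for f
  have eig: "X *v f = lam f *\<^sub>R f" if "f \<in> F" for f using F that by (simp add: OE_def lam_def)
  have lpos: "lam f > 0" if f: "f \<in> F" for f
  proof -
    have "lam f \<ge> 0" using pos by (simp add: lam_def)
    moreover have "lam f \<noteq> 0"
    proof
      assume "lam f = 0"
      then have "X *v f = X *v 0" using eig[OF f] by simp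
      then have "f = 0" using inj_matrix_vector_mult[OF inv] unfolding inj_def by blast
      then show False using F f by (auto simp: OE_def)
    qed
    ultimately show ?thesis by simp
  qed
  define S where "S = (\<Sum>f\<in>F. sqrt (lam f) *\<^sub>R outer f)"
  have Sv: "S *v v = (\<Sum>f\<in>F. (sqrt (lam f) * (f \<bullet> v)) *\<^sub>R f)" for v
    by (simp add: S_def mv_sum mv_scaleR outer_mv)
  have fSv: "f \<bullet> (S *v v) = sqrt (lam f) * (f \<bullet> v)" if "f \<in> F" for f v
    unfolding Sv by (rule OE_coeff[OF F that])
  have SS: "S ** S = X"
  proof -
    have "(S ** S) *v v = X *v v" for v
    proof -
      have "(S ** S) *v v = S *v (S *v v)" by (simp add: matrix_vector_mul_assoc)
      also have "\<dots> = (\<Sum>f\<in>F. (sqrt (lam f) * (f \<bullet> (S *v v))) *\<^sub>R f)" by (rule Sv)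
      also have "\<dots> = (\<Sum>f\<in>F. (lam f * (f \<bullet> v)) *\<^sub>R f)"
        by (rule sum.cong) (auto simp: fSv lpos less_imp_le mult.assoc[symmetric])
      also have "\<dots> = (\<Sum>f\<in>F. (f \<bullet> v) *\<^sub>R (X *v f))"
        by (rule sum.cong) (auto simp: eig)
      also have "\<dots> = X *v (\<Sum>f\<in>F. (f \<bullet> v) *\<^sub>R f)"
        by (simp add: mv_sum_right matrix_vector_mult_scaleR)
      also have "\<dots> = X *v v" using exp[of v] by simp
      finally show ?thesis .
    qed
    then show ?thesis by (simp add: matrix_eq)
  qed
  have psdS: "psd S"
  proof -
    have "transpose S = S" by (simp add: S_def transpose_sum transpose_scalar transpose_outer)
    moreover have "0 \<le> v \<bullet> (S *v v)" for v
    proof -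
      have "v \<bullet> (S *v v) = (\<Sum>f\<in>F. sqrt (lam f) * (f \<bullet> v) * (v \<bullet> f))"
        by (simp add: Sv inner_sum_right)
      also have "\<dots> = (\<Sum>f\<in>F. sqrt (lam f) * (f \<bullet> v)^2)"
        by (simp add: power2_eq_square inner_commute mult.assoc)
      also have "\<dots> \<ge> 0" by (rule sum_nonneg) (simp add: lpos less_imp_le)
      finally show ?thesis .
    qed
    ultimately show ?thesis by (simp add: psd_def)
  qed
  have uniq: "R = S" if R: "psd R" "R ** R = X" for R
  proof -
    have Rsym: "transpose R = R" and Rpos: "\<And>v. 0 \<le> v \<bullet> (R *v v)" using R(1) by (auto simp: psd_def)
    have Rf: "R *v f = sqrt (lam f) *\<^sub>R f" if f: "f \<in> F" for f
    proof -
      define \<sigma> where "\<sigma> = sqrt (lam f)"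
      have s0: "\<sigma> > 0" using lpos[OF f] by (simp add: \<sigma>_def)
      have ss: "\<sigma> * \<sigma> = lam f" using lpos[OF f] by (simp add: \<sigma>_def)
      define w where "w = R *v f - \<sigma> *\<^sub>R f"
      have RR: "R *v (R *v f) = lam f *\<^sub>R f" using R(2) eig[OF f] by (simp add: matrix_vector_mul_assoc)
      have "R *v w = lam f *\<^sub>R f - \<sigma> *\<^sub>R (R *v f)"
        by (simp add: w_def matrix_vector_mult_diff_distrib matrix_vector_mult_scaleR RR)
      also have "\<dots> = (-\<sigma>) *\<^sub>R w" by (simp add: w_def ss[symmetric] algebra_simps)
      finally have Rw: "R *v w = (-\<sigma>) *\<^sub>R w" .
      have "0 \<le> w \<bullet> (R *v w)" by (rule Rpos)
      also have "\<dots> = - \<sigma> * (w \<bullet> w)" by (simp add: Rw)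
      finally have "\<sigma> * (w \<bullet> w) \<le> 0" by simp
      then have "w \<bullet> w \<le> 0" using s0 by (simp add: mult_le_0_iff)
      then have "w = 0" by (metis inner_eq_zero_iff inner_ge_zero order_antisym)
      then show ?thesis by (simp add: w_def \<sigma>_def)
    qed
    have "R *v v = S *v v" for v
    proof -
      have "R *v v = R *v (\<Sum>f\<in>F. (f \<bullet> v) *\<^sub>R f)" using exp[of v] by simp
      also have "\<dots> = (\<Sum>f\<in>F. (f \<bullet> v) *\<^sub>R (R *v f))" by (simp add: mv_sum_right matrix_vector_mult_scaleR)
      also have "\<dots> = (\<Sum>f\<in>F. (sqrt (lam f) * (f \<bullet> v)) *\<^sub>R f)" by (rule sum.cong) (auto simp: Rf)
      also have "\<dots> = S *v v" by (simp add: Sv)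
      finally show ?thesis .
    qed
    then show ?thesis by (simp add: matrix_eq)
  qed
  show ?thesis using psdS SS uniq by blast
qed


lemma design_mv: "design y u *v v = (\<Sum>k\<in>UNIV. (y$k * (u k \<bullet> v)) *\<^sub>R u k)"
  by (simp add: design_def mv_sum mv_scaleR outer_mv)

lemma design_sym: "transpose (design y u) = design y u"
  by (simp add: design_def transpose_sum transpose_scalar transpose_outer)

lemma design_pos: "(\<forall>k. 0 \<le> y$k) \<Longrightarrow> 0 \<le> v \<bullet> (design y u *v v)"
proof -
  assume a: "\<forall>k. 0 \<le> y$k"
  have "v \<bullet> (design y u *v v) = (\<Sum>k\<in>UNIV. y$k * (u k \<bullet> v)^2)"
    unfolding design_mv inner_sum_right by (simp add: power2_eq_square inner_commute mult.assoc)
  also have "\<dots> \<ge> 0" using a by (intro sum_nonneg) simp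
  finally show ?thesis .
qed

lemma inv_sym:
  fixes A B :: "real^'n^'n"
  assumes "transpose A = A" "A ** B = mat 1"
  shows "transpose B = B"
proof -
  have "transpose (A ** B) = mat 1" using assms(2) by simp
  then have "transpose B ** A = mat 1" using assms(1) by (simp add: matrix_transpose_mul)
  then have "A ** transpose B = mat 1" using matrix_left_right_inverse by blast
  then have "matrix_inv A = transpose B" by (rule matrix_inv_eq)
  moreover have "matrix_inv A = B" using assms(2) by (rule matrix_inv_eq)
  ultimately show ?thesis by simp
qed

lemma diag_nonneg:
  fixes Q :: "real^'n^'n"
  assumes "transpose Q = Q"
  shows "0 \<le> trace (Q ** Q)"
proof -
  have "(Q ** Q)$k$k = (\<Sum>j\<in>UNIV. (Q$k$j)^2)" for k
  proof -
    have "Q$j$k = Q$k$j" for j using assms by (metis transpose_def vec_lambda_beta)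
    then show ?thesis by (simp add: matrix_matrix_mult_def power2_eq_square)
  qed
  then show ?thesis by (simp add: trace_def sum_nonneg)
qed


theorem lemma4p16:
  fixes u :: "'n::finite \<Rightarrow> real^'d::finite"
    and m :: nat and c :: "nat \<Rightarrow> real^'n" and b :: "nat \<Rightarrow> real"
    and \<epsilon> :: real and x :: "real^'n" and i :: 'n
  assumes c_nonneg: "\<forall>j<m. \<forall>k. 0 \<le> c j $ k"
    and eps: "\<epsilon> > 0"
    and budget: "\<forall>j<m. b j \<ge> real CARD('d) * infnorm (c j) / \<epsilon>"
    and opt: "optimal u m c b x"
    and frac: "0 < x$i" "x$i < 1"
  shows "let X = design x u; v = matrix_inv (msqrt X) *v u i in
         frob (matrix_inv X) (outer v) \<le> \<epsilon> / real CARD('d) * trace (matrix_inv X)"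
proof -
  define X where "X = design x u"
  define P where "P = matrix_inv X"
  define S where "S = msqrt X"
  define Q where "Q = matrix_inv S"
  define w where "w = u i"
  define v where "v = Q *v w"
  define T where "T = trace P"
  define g where "g = (P *v w) \<bullet> (P *v w)"
  define h where "h = w \<bullet> (P *v w)"
  have feas: "feasible m c b x" and Xinv: "invertible X"
    and optm: "\<And>y. feasible m c b y \<Longrightarrow> invertible (design y u) \<Longrightarrow> trace P \<le> trace (matrix_inv (design y u))"
    using opt by (auto simp: optimal_def X_def P_def)
  have x01: "\<And>k. 0 \<le> x$k \<and> x$k \<le> 1" using feas by (simp add: feasible_def)
  have Xsym: "transpose X = X" by (simp add: X_def design_sym)
  have Xpos: "\<forall>v. 0 \<le> v \<bullet> (X *v v)" using x01 by (simp add: X_def design_pos)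
  have Sprop: "psd S \<and> S ** S = X"
    unfolding S_def msqrt_def by (rule theI'[OF sqrt_exists_unique[OF Xsym Xpos Xinv]])
  have Ssym: "transpose S = S" and SS: "S ** S = X" using Sprop by (auto simp: psd_def)
  have XP: "X ** P = mat 1" "P ** X = mat 1" using matrix_inv_props[OF Xinv] by (auto simp: P_def)
  have "S ** (S ** P) = mat 1" using XP SS by (simp add: matrix_mul_assoc)
  then have Qeq: "Q = S ** P" unfolding Q_def by (rule matrix_inv_eq)
  have SQ: "S ** Q = mat 1" using XP SS by (simp add: Qeq matrix_mul_assoc)
  have Qsym: "transpose Q = Q" by (rule inv_sym[OF Ssym SQ])
  have Psym: "transpose P = P" by (rule inv_sym[OF Xsym XP(1)])
  have "X ** (Q ** Q) = mat 1"
  proof -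
    have "X ** (Q ** Q) = S ** ((S ** Q) ** Q)" by (simp add: SS[symmetric] matrix_mul_assoc)
    also have "\<dots> = mat 1" by (simp add: SQ)
    finally show ?thesis .
  qed
  then have PQQ: "P = Q ** Q" unfolding P_def by (rule matrix_inv_eq)
  have XPv: "X *v (P *v z) = z" for z using XP by (simp add: matrix_vector_mul_assoc)
  have frob_eq: "frob P (outer v) = g"
  proof -
    have "frob P (outer v) = (Q *v w) \<bullet> (P *v (Q *v w))" by (simp add: frob_outer v_def)
    also have "\<dots> = w \<bullet> (Q *v (P *v (Q *v w)))" by (rule sym_dot[OF Qsym, symmetric])
    also have "Q *v (P *v (Q *v w)) = P *v (P *v w)"
      by (simp add: matrix_vector_mul_assoc PQQ matrix_mul_assoc)
    also have "w \<bullet> (P *v (P *v w)) = g" using sym_dot[OF Psym] by (simp add: g_def)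
    finally show ?thesis .
  qed
  have h0: "h \<ge> 0"
  proof -
    have "h = (Q *v w) \<bullet> (Q *v w)" using sym_dot[OF Qsym, of w "Q *v w"]
      by (simp add: h_def PQQ matrix_vector_mul_assoc[symmetric])
    then show ?thesis by simp
  qed
  have T0: "T \<ge> 0" unfolding T_def PQQ by (rule diag_nonneg[OF Qsym])
  define d where "d = real CARD('d)"
  have d0: "d > 0" by (simp add: d_def)
  define D where "D = d / \<epsilon>"
  have D0: "D > 0" using d0 eps by (simp add: D_def)
  have "g \<le> \<epsilon> / d * T"
  proof (rule ccontr)
    assume "\<not> g \<le> \<epsilon> / d * T"
    then have "\<epsilon> / d * T < g" by simp
    then have "T < D * g" using d0 eps by (simp add: D_def field_simps)
    define K where "K = D * g - T"
    have K0: "K > 0" using \<open>T < D * g\<close> by (simp add: K_def)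
    define t where "t = min (1/2) (min ((1 - x$i) / D) (K / (4*D*h*T + 1)))"
    have hT: "0 \<le> h * T" using h0 T0 by simp
    have DhT: "0 \<le> D * (h * T)" using D0 hT by simp
    have den: "4*D*h*T + 1 > 0" using DhT by (simp add: mult.assoc)
    have t0: "t > 0" using K0 den D0 frac by (simp add: t_def)
    have th: "t \<le> 1/2" unfolding t_def by (rule min.cobounded1)
    have t1: "t \<le> (1 - x$i) / D" unfolding t_def by (meson min.cobounded1 min.cobounded2 order_trans)
    have t2: "t \<le> K / (4*D*h*T + 1)" unfolding t_def by (meson min.cobounded2 order_trans)
    have tx: "t * D \<le> 1 - x$i" using t1 D0 by (simp add: le_divide_eq)
    have tK: "t * (4*D*h*T + 1) \<le> K" using t2 den by (simp add: le_divide_eq)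
    define \<delta> where "\<delta> = t * D"
    have \<delta>0: "\<delta> \<ge> 0" using t0 D0 by (simp add: \<delta>_def)
    define y where "y = (1 - t) *\<^sub>R x + \<delta> *\<^sub>R axis i 1"
    have yk: "y$k = (1 - t) * x$k + (if k = i then \<delta> else 0)" for k
      by (simp add: y_def axis_def)
    have Y: "design y u = (1 - t) *\<^sub>R X + \<delta> *\<^sub>R outer w"
    proof -
      have "design y u = (\<Sum>k\<in>UNIV. ((1 - t) * x$k) *\<^sub>R outer (u k) + (if k = i then \<delta> else 0) *\<^sub>R outer (u k))"
        unfolding design_def by (rule sum.cong) (simp_all add: yk scaleR_add_left)
      also have "\<dots> = (1 - t) *\<^sub>R X + \<delta> *\<^sub>R outer w"
        by (simp add: sum.distrib X_def design_def scaleR_sum_right w_def if_distrib[of "\<lambda>a. a *\<^sub>R _"] cong: if_cong)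
      finally show ?thesis .
    qed
    have yfeas: "feasible m c b y"
    proof -
      have "c j \<bullet> y \<le> b j" if j: "j < m" for j
      proof -
        have cx: "c j \<bullet> x \<le> b j" using feas j by (simp add: feasible_def)
        have ci: "c j $ i \<le> infnorm (c j)" using component_le_infnorm_cart[of "c j" i] by simp
        have bj: "D * infnorm (c j) \<le> b j" using budget j by (simp add: D_def d_def)
        have "c j \<bullet> y = (1 - t) * (c j \<bullet> x) + \<delta> * (c j $ i)"
          by (simp add: y_def inner_add_right inner_axis)
        also have "\<dots> \<le> (1 - t) * b j + \<delta> * infnorm (c j)"
          using cx ci th \<delta>0 by (intro add_mono mult_left_mono) auto
        also have "\<delta> * infnorm (c j) = t * (D * infnorm (c j))" by (simp add: \<delta>_def)
        also have "\<dots> \<le> t * b j" using bj t0 by (intro mult_left_mono) auto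
        finally show ?thesis by (simp add: algebra_simps)
      qed
      moreover have "0 \<le> y$k \<and> y$k \<le> 1" for k
      proof -
        have "0 \<le> (1 - t) * x$k" using x01[of k] th by simp
        moreover have "(1 - t) * x$k \<le> x$k"
        proof -
          have "0 \<le> t * x$k" using x01[of k] t0 by simp
          then show ?thesis by (simp add: algebra_simps)
        qed
        ultimately show ?thesis using x01[of k] \<delta>0 tx unfolding yk \<delta>_def by auto
      qed
      ultimately show ?thesis by (simp add: feasible_def)
    qed
    define s where "s = \<delta> / (1 - t)"
    have s0: "s \<ge> 0" using \<delta>0 th by (simp add: s_def)
    have sh: "1 + s * h > 0" using s0 h0 by (smt (verit) mult_nonneg_nonneg)
    define c' where "c' = s / (1 + s * h)"
    have c'eq: "s - c' - s * c' * h = 0" using sh by (simp add: c'_def field_simps)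
    define M where "M = (1 / (1 - t)) *\<^sub>R (P - c' *\<^sub>R outer (P *v w))"
    have YM: "design y u ** M = mat 1"
    proof -
      have "(design y u ** M) *v z = z" for z
      proof -
        define a where "a = (P *v w) \<bullet> z"
        have wPz: "w \<bullet> (P *v z) = a" using sym_dot[OF Psym, of w z] by (simp add: a_def)
        have Mz: "M *v z = (1 / (1 - t)) *\<^sub>R (P *v z - (c' * a) *\<^sub>R (P *v w))"
          by (simp add: M_def mv_scaleR matrix_vector_mult_diff_rdistrib outer_mv a_def)
        have "(design y u ** M) *v z = design y u *v (M *v z)" by (simp add: matrix_vector_mul_assoc)
        also have "\<dots> = (1 - t) *\<^sub>R (X *v (M *v z)) + \<delta> *\<^sub>R ((w \<bullet> (M *v z)) *\<^sub>R w)"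
          by (simp add: Y matrix_vector_mult_add_rdistrib mv_scaleR outer_mv)
        also have "(1 - t) *\<^sub>R (X *v (M *v z)) = z - (c' * a) *\<^sub>R w"
          using th by (simp add: Mz matrix_vector_mult_scaleR matrix_vector_mult_diff_distrib XPv)
        also have "\<delta> *\<^sub>R ((w \<bullet> (M *v z)) *\<^sub>R w) = (s * (a - c' * a * h)) *\<^sub>R w"
          using th by (simp add: Mz inner_diff_right wPz h_def s_def)
        also have "z - (c' * a) *\<^sub>R w + (s * (a - c' * a * h)) *\<^sub>R w = z + (a * (s - c' - s * c' * h)) *\<^sub>R w"
          by (simp add: algebra_simps)
        also have "\<dots> = z" by (simp add: c'eq)
        finally show ?thesis .
      qed
      then show ?thesis by (simp add: matrix_eq)
    qed
    have Yinv: "invertible (design y u)" using YM invertible_right_inverse by blast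
    have trM: "trace M = (1 / (1 - t)) * (T - c' * g)"
      by (simp add: M_def trace_scaleR trace_sub trace_outer T_def g_def)
    have "T \<le> trace M" using optm[OF yfeas Yinv] YM by (simp add: matrix_inv_eq T_def)
    then have A0: "T \<le> (T - c' * g) / (1 - t)" by (simp add: trM)
    have A1: "(1 - t) * T \<le> T - c' * g" using A0 th by (simp add: le_divide_eq mult.commute)
    have A2: "s * g \<le> t * T * (1 + s * h)"
    proof -
      have "c' * g \<le> t * T" using A1 by (simp add: algebra_simps)
      then show ?thesis using sh by (simp add: c'_def field_simps)
    qed
    have A4: "D * g \<le> (1 - t) * (T * (1 + s * h))"
    proof -
      have "s * g = t * (D * g / (1 - t))" by (simp add: s_def \<delta>_def)
      with A2 have "t * (D * g / (1 - t)) \<le> t * (T * (1 + s * h))" by (simp add: mult.assoc)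
      then have "D * g / (1 - t) \<le> T * (1 + s * h)" using mult_left_le_imp_le[OF _ t0] by blast
      then show ?thesis using th by (simp add: divide_le_eq mult.commute)
    qed
    have A5: "(1 - t) * (T * (1 + s * h)) \<le> T * (1 + s * h)"
    proof -
      have "0 \<le> t * (T * (1 + s * h))" using T0 sh t0 by simp
      then show ?thesis by (simp add: algebra_simps)
    qed
    have A6: "s \<le> 2 * t * D"
    proof -
      have "s = t * D / (1 - t)" by (simp add: s_def \<delta>_def)
      also have "\<dots> \<le> 2 * t * D" using th t0 D0 by (simp add: divide_le_eq)
      finally show ?thesis .
    qed
    have A7: "s * (h * T) \<le> 2 * t * D * (h * T)" using A6 hT by (rule mult_right_mono)
    have A8: "4 * (t * D * h * T) \<le> K" using tK t0 by (simp add: algebra_simps)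
    have "D * g \<le> T + s * (h * T)" using A4 A5 by (simp add: algebra_simps)
    then show False using A7 A8 K0 by (simp add: K_def algebra_simps)
  qed
  then show ?thesis
    by (simp add: Let_def X_def[symmetric] P_def[symmetric] S_def[symmetric] Q_def[symmetric]
        w_def[symmetric] v_def[symmetric] frob_eq T_def[symmetric] d_def[symmetric])
qed

end
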